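(* Let $K\ge1$, $\delta\in(0,1)$, and real parameters $\theta_1,\dots,\theta_K$. For each $i\in[K]$ let $E_i^+$ be an e-value with respect to $[0,\infty)$ (i.e. $E_i^+\ge0$ and $\mathbb{E}[E_i^+]\le1$ whenever $\theta_i\ge0$) and $E_i^-$ an e-value with respect to $(-\infty,0]$ (i.e. $E_i^-\ge0$ and $\mathbb{E}[E_i^-]\le1$ whenever $\theta_i\le0$), with $E_i^+=(E_i^-)^{-1}$, and set $E_i=(E_i^+\vee E_i^-)/2$. The e-values may be arbitrarily dependent across $i$. Let $E_{(1)}\ge\dots\ge E_{(K)}$ be the ordered $E_i$, let $k=\max\{k\in[K]: E_{(k)}\ge K/(\delta k)\}$ (with $k=0$ if the set is empty), and let $R$ be the set of indices of the $k$ largest $E_i$. For each $i\in R$ set $D_i=-1$ if $E_i^+\ge K/(\delta k)$ and $D_i=1$ otherwise. Then $$\mathrm{dFDR}=\mathbb{E}\left[\frac{\sum_{i\in R}\left(\mathbf 1\{D_i=1,\theta_i\le0\}+\mathbf 1\{D_i=-1,\theta_i\ge0\}\right)}{|R|\vee 1}\right]\le\delta .$$ *)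

theory Defs
  imports "HOL-Probability.Probability"
begin

definition eord :: "(nat \<Rightarrow> real) \<Rightarrow> nat \<Rightarrow> nat \<Rightarrow> real" where
  "eord e K j = rev (sort (map e [1..<K+1])) ! (j - 1)"

definition ebh_k :: "(nat \<Rightarrow> real) \<Rightarrow> nat \<Rightarrow> real \<Rightarrow> nat" where
  "ebh_k e K \<delta> =
     (let S = {k \<in> {1..K}. eord e K k \<ge> real K / (\<delta> * real k)} in
      if S = {} then 0 else Max S)"

text \<open>R is a set of indices of the k largest values (any tie-breaking).\<close>
definition top_set :: "(nat \<Rightarrow> real) \<Rightarrow> nat \<Rightarrow> nat \<Rightarrow> nat set \<Rightarrow> bool" where
  "top_set e K k R \<longleftrightarrow> R \<subseteq> {1..K} \<and> card R = k \<and>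
     (\<forall>i\<in>R. \<forall>j\<in>{1..K} - R. e j \<le> e i)"

definition dir_dec :: "real \<Rightarrow> nat \<Rightarrow> real \<Rightarrow> nat \<Rightarrow> int" where
  "dir_dec ep K \<delta> k = (if ep \<ge> real K / (\<delta> * real k) then -1 else 1)"

end

theory Submission imports Defs begin

lemma count_ge_eord:
  fixes e :: "nat \<Rightarrow> real"
  assumes "1 \<le> k" "k \<le> K"
  shows "k \<le> card {j\<in>{1..K}. eord e K k \<le> e j}"
proof -
  define v where "v = eord e K k"
  define S where "S = sort (map e [1..<K+1])"
  define L where "L = rev S"
  have lenS: "length S = K" unfolding S_def by simp
  have sS: "sorted S" unfolding S_def by simp
  have vL: "v = L ! (k-1)" unfolding v_def L_def S_def eord_def by simp
  have tk: "\<forall>x\<in>set (take k L). v \<le> x"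
  proof
    fix x assume "x \<in> set (take k L)"
    then obtain m where m: "m < length (take k L)" "x = take k L ! m" by (metis in_set_conv_nth)
    have mk: "m < k" "m < K" using m lenS L_def by auto
    have "x = L ! m" using m by simp
    also have "\<dots> = S ! (K - Suc m)" unfolding L_def using rev_nth[of m S] lenS mk by simp
    finally have x: "x = S ! (K - Suc m)" .
    have "v = S ! (K - Suc (k-1))" unfolding vL L_def using rev_nth[of "k-1" S] lenS assms by simp
    moreover have "S ! (K - Suc (k-1)) \<le> S ! (K - Suc m)"
      by (rule sorted_nth_mono[OF sS]) (use mk assms lenS in auto)
    ultimately show "v \<le> x" using x by simp
  qed
  have "k = length (filter (\<lambda>x. v \<le> x) (take k L))"
    using tk lenS assms unfolding L_def by (simp add: filter_True)
  also have "\<dots> \<le> length (filter (\<lambda>x. v \<le> x) L)"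
  proof -
    have "filter (\<lambda>x. v \<le> x) L = filter (\<lambda>x. v \<le> x) (take k L) @ filter (\<lambda>x. v \<le> x) (drop k L)"
      by (metis append_take_drop_id filter_append)
    then show ?thesis by simp
  qed
  also have "\<dots> = length (filter (\<lambda>x. v \<le> x) (map e [1..<K+1]))"
    unfolding L_def S_def by (metis mset_filter mset_rev mset_sort size_mset)
  also have "\<dots> = length (filter (\<lambda>j. v \<le> e j) [1..<K+1])" by (simp only: filter_map length_map o_def)
  also have "\<dots> = card {j\<in>{1..K}. v \<le> e j}"
  proof -
    have "length (filter (\<lambda>j. v \<le> e j) [1..<K+1]) = card (set (filter (\<lambda>j. v \<le> e j) [1..<K+1]))"
      by (rule distinct_card[symmetric]) (rule distinct_filter, rule distinct_upt)
    also have "set (filter (\<lambda>j. v \<le> e j) [1..<K+1]) = {j\<in>{1..K}. v \<le> e j}" by auto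
    finally show ?thesis .
  qed
  finally show ?thesis unfolding v_def .
qed

lemma top_ge_eord:
  fixes e :: "nat \<Rightarrow> real"
  assumes "top_set e K k R" "1 \<le> k" "k \<le> K" "i \<in> R"
  shows "eord e K k \<le> e i"
proof (rule ccontr)
  assume "\<not> ?thesis"
  hence lt: "e i < eord e K k" by simp
  have R: "R \<subseteq> {1..K}" "card R = k" "\<forall>i\<in>R. \<forall>j\<in>{1..K} - R. e j \<le> e i"
    using assms(1) unfolding top_set_def by auto
  have sub: "{j\<in>{1..K}. eord e K k \<le> e j} \<subseteq> R - {i}"
  proof
    fix j assume j: "j \<in> {j\<in>{1..K}. eord e K k \<le> e j}"
    have "j \<noteq> i" using j lt by auto
    moreover have "j \<in> R"
    proof (rule ccontr)
      assume "j \<notin> R"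
      then have "e j \<le> e i" using R(3) assms(4) j by blast
      then show False using j lt by simp
    qed
    ultimately show "j \<in> R - {i}" by simp
  qed
  have fin: "finite R" using R(1) finite_subset by blast
  have "k \<le> card (R - {i})"
    using count_ge_eord[OF assms(2,3), of e] card_mono[OF _ sub] fin by fastforce
  also have "\<dots> = k - 1" using R(2) assms(4) fin by simp
  finally show False using assms(2) by simp
qed

lemma ebh_k_props:
  assumes "1 \<le> ebh_k e K \<delta>"
  shows "ebh_k e K \<delta> \<le> K" "eord e K (ebh_k e K \<delta>) \<ge> real K / (\<delta> * real (ebh_k e K \<delta>))"
proof -
  let ?S = "{k \<in> {1..K}. eord e K k \<ge> real K / (\<delta> * real k)}"
  have d: "ebh_k e K \<delta> = (if ?S = {} then 0 else Max ?S)" unfolding ebh_k_def Let_def ..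
  have ne: "?S \<noteq> {}"
  proof
    assume e: "?S = {}"
    have "ebh_k e K \<delta> = 0" using d[unfolded if_P[OF e]] .
    then show False using assms by simp
  qed
  have eq: "ebh_k e K \<delta> = Max ?S" using d[unfolded if_not_P[OF ne]] .
  have "Max ?S \<in> ?S" by (rule Max_in) (use ne in auto)
  then show "ebh_k e K \<delta> \<le> K" "eord e K (ebh_k e K \<delta>) \<ge> real K / (\<delta> * real (ebh_k e K \<delta>))"
    unfolding eq by auto
qed

lemma evalue_int:
  fixes f :: "'a \<Rightarrow> real"
  assumes "f \<in> borel_measurable M" "\<And>x. x \<in> space M \<Longrightarrow> 0 \<le> f x"
    "(\<integral>\<^sup>+ x. ennreal (f x) \<partial>M) \<le> 1"
  shows "integrable M f" "integral\<^sup>L M f \<le> 1"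
proof -
  have ae: "AE x in M. 0 \<le> f x" using assms(2) by simp
  show "integrable M f"
    by (rule integrableI_nonneg[OF assms(1) ae]) (use assms(3) in \<open>simp add: order_le_less_trans\<close>)
  show "integral\<^sup>L M f \<le> 1"
    unfolding integral_eq_nn_integral[OF assms(1) ae]
    using assms(3) by (simp add: enn2real_leI)
qed

lemma pointwise:
  fixes Ep Em th T :: real and F :: real
  assumes "T > 0" "Ep \<ge> 0" "Em \<ge> 0" "max Ep Em / 2 \<ge> T"
    "F = (let D = (if Ep \<ge> T then -1 else (1::int))
              in (if D = 1 \<and> th \<le> 0 then 1 else 0) + (if D = -1 \<and> th \<ge> 0 then 1 else 0))"
  shows "F * T \<le> (if th > 0 then Ep else if th < 0 then Em else (Ep + Em) / 2)"
proof (cases "Ep \<ge> T")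
  case True
  then have F: "F = (if th \<ge> 0 then 1 else 0)" using assms(5) by (simp add: Let_def)
  have m: "max Ep Em \<le> Ep + Em" using assms by simp
  show ?thesis using True assms(1-4) m unfolding F by auto
next
  case False
  then have F: "F = (if th \<le> 0 then 1 else 0)" using assms(5) by (simp add: Let_def)
  have m: "max Ep Em \<le> Ep + Em" using assms by simp
  have "Em \<ge> 2 * T" using False assms(1-4) by (auto simp: max_def split: if_splits)
  then show ?thesis using False assms(1-4) m unfolding F by auto
qed

theorem corollary3:
  fixes M :: "'a measure" and K :: nat and \<delta> :: real
    and \<theta> :: "nat \<Rightarrow> real"
    and Ep Em :: "nat \<Rightarrow> 'a \<Rightarrow> real"
    and R :: "'a \<Rightarrow> nat set"
  assumes "prob_space M"
    and "K \<ge> 1" and "0 < \<delta>" and "\<delta> < 1"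
    and "\<And>i. i \<in> {1..K} \<Longrightarrow> Ep i \<in> borel_measurable M"
    and "\<And>i. i \<in> {1..K} \<Longrightarrow> Em i \<in> borel_measurable M"
    and "\<And>i \<omega>. i \<in> {1..K} \<Longrightarrow> \<omega> \<in> space M \<Longrightarrow> Ep i \<omega> \<ge> 0"
    and "\<And>i \<omega>. i \<in> {1..K} \<Longrightarrow> \<omega> \<in> space M \<Longrightarrow> Em i \<omega> \<ge> 0"
    and "\<And>i. i \<in> {1..K} \<Longrightarrow> \<theta> i \<ge> 0 \<Longrightarrow> (\<integral>\<^sup>+ \<omega>. ennreal (Ep i \<omega>) \<partial>M) \<le> 1"
    and "\<And>i. i \<in> {1..K} \<Longrightarrow> \<theta> i \<le> 0 \<Longrightarrow> (\<integral>\<^sup>+ \<omega>. ennreal (Em i \<omega>) \<partial>M) \<le> 1"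
    and "\<And>i \<omega>. i \<in> {1..K} \<Longrightarrow> \<omega> \<in> space M \<Longrightarrow> Ep i \<omega> = inverse (Em i \<omega>)"
    and "\<And>\<omega>. \<omega> \<in> space M \<Longrightarrow>
           top_set (\<lambda>i. max (Ep i \<omega>) (Em i \<omega>) / 2) K
             (ebh_k (\<lambda>i. max (Ep i \<omega>) (Em i \<omega>) / 2) K \<delta>) (R \<omega>)"
    and "\<And>i. i \<in> {1..K} \<Longrightarrow> {\<omega> \<in> space M. i \<in> R \<omega>} \<in> sets M"
  shows "(\<integral>\<omega>. (\<Sum>i\<in>R \<omega>.
             (let k = ebh_k (\<lambda>j. max (Ep j \<omega>) (Em j \<omega>) / 2) K \<delta>;
                  D = dir_dec (Ep i \<omega>) K \<delta> k
              in (if D = 1 \<and> \<theta> i \<le> 0 then 1 else 0)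
                 + (if D = -1 \<and> \<theta> i \<ge> 0 then 1 else 0)))
           / real (max (card (R \<omega>)) 1) \<partial>M) \<le> \<delta>"
  (is "integral\<^sup>L M ?f \<le> _")
proof -
  note A = assms
  define e where "e = (\<lambda>\<omega> i. max (Ep i \<omega>) (Em i \<omega>) / 2)"
  define X where "X = (\<lambda>i \<omega>. if \<theta> i > 0 then Ep i \<omega> else if \<theta> i < 0 then Em i \<omega>
                             else (Ep i \<omega> + Em i \<omega>) / 2)"
  define g where "g = (\<lambda>\<omega>. \<delta> / real K * (\<Sum>i\<in>{1..K}. X i \<omega>))"
  have Xnn: "X i \<omega> \<ge> 0" if "i \<in> {1..K}" "\<omega> \<in> space M" for i \<omega>
    using A(7)[OF that] A(8)[OF that] unfolding X_def by auto
  have intX: "integrable M (X i) \<and> integral\<^sup>L M (X i) \<le> 1" if i: "i \<in> {1..K}" for i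
  proof -
    have p1: "integrable M (Ep i)" "integral\<^sup>L M (Ep i) \<le> 1" if "\<theta> i \<ge> 0"
      using evalue_int[OF A(5)[OF i] A(7)[OF i] A(9)[OF i that]] by auto
    have p2: "integrable M (Em i)" "integral\<^sup>L M (Em i) \<le> 1" if "\<theta> i \<le> 0"
      using evalue_int[OF A(6)[OF i] A(8)[OF i] A(10)[OF i that]] by auto
    consider "\<theta> i > 0" | "\<theta> i < 0" | "\<theta> i = 0" by linarith
    then show ?thesis
    proof cases
      case 1
      then have "X i = Ep i" unfolding X_def by (simp add: fun_eq_iff)
      then show ?thesis using p1 1 by simp
    next
      case 2
      then have "X i = Em i" unfolding X_def by (simp add: fun_eq_iff)
      then show ?thesis using p2 2 by simp
    next
      case 3
      then have X: "X i = (\<lambda>\<omega>. (Ep i \<omega> + Em i \<omega>) / 2)" unfolding X_def by (simp add: fun_eq_iff)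
      have ip: "integrable M (Ep i)" "integrable M (Em i)" using p1 p2 3 by auto
      have "integrable M (\<lambda>\<omega>. (Ep i \<omega> + Em i \<omega>) / 2)"
        using ip by (intro integrable_divide integrable_add) auto
      moreover have "integral\<^sup>L M (\<lambda>\<omega>. (Ep i \<omega> + Em i \<omega>) / 2)
          = (integral\<^sup>L M (Ep i) + integral\<^sup>L M (Em i)) / 2"
        using ip by (simp add: integral_add)
      ultimately show ?thesis using X p1(2) p2(2) 3 by simp
    qed
  qed
  have intg: "integrable M g" unfolding g_def
    using intX by (intro integrable_mult_right integrable_sum) auto
  have "integral\<^sup>L M g = \<delta> / real K * (\<Sum>i\<in>{1..K}. integral\<^sup>L M (X i))"
    unfolding g_def using intX by (simp add: integral_sum)
  also have "\<dots> \<le> \<delta> / real K * (\<Sum>i\<in>{1..K}. 1)"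
    using intX A(3) by (intro mult_left_mono sum_mono) auto
  also have "\<dots> = \<delta>" using A(2) by simp
  finally have gle: "integral\<^sup>L M g \<le> \<delta>" .
  have pw: "?f \<omega> \<le> g \<omega>" if w: "\<omega> \<in> space M" for \<omega>
  proof -
    have "0 \<le> (\<Sum>i\<in>{1..K}. X i \<omega>)" using Xnn[OF _ w] by (intro sum_nonneg) auto
    then have gnn: "0 \<le> g \<omega>" unfolding g_def using A(3) by simp
    show ?thesis
    proof (cases "R \<omega> = {}")
      case True
      then show ?thesis using gnn by simp
    next
      case False
      define k where "k = ebh_k (e \<omega>) K \<delta>"
      have ts: "top_set (e \<omega>) K k (R \<omega>)" using A(12)[OF w] unfolding k_def e_def .
      have Rsub: "R \<omega> \<subseteq> {1..K}" and cR: "card (R \<omega>) = k" using ts unfolding top_set_def by auto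
      have finR: "finite (R \<omega>)" using Rsub finite_subset by blast
      have k1: "1 \<le> k" using cR False finR by (metis card_gt_0_iff Suc_leI One_nat_def)
      have kK: "k \<le> K" and eT: "eord (e \<omega>) K k \<ge> real K / (\<delta> * real k)"
        using ebh_k_props[of "e \<omega>" K \<delta>] k1 unfolding k_def by auto
      define T where "T = real K / (\<delta> * real k)"
      have Tpos: "T > 0" unfolding T_def using A(2,3) k1 by simp
      have Td: "T * (\<delta> / real K) = 1 / real k" unfolding T_def using A(2,3) k1 by (simp add: field_simps)
      define F where "F = (\<lambda>i. (let k = ebh_k (\<lambda>j. max (Ep j \<omega>) (Em j \<omega>) / 2) K \<delta>;
                  D = dir_dec (Ep i \<omega>) K \<delta> k
              in (if D = 1 \<and> \<theta> i \<le> 0 then 1 else 0)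
                 + (if D = -1 \<and> \<theta> i \<ge> 0 then (1::real) else 0)))"
      have fw: "?f \<omega> = (\<Sum>i\<in>R \<omega>. F i) / real k" unfolding F_def using cR k1 by simp
      have Fb: "F i / real k \<le> \<delta> / real K * X i \<omega>" if i: "i \<in> R \<omega>" for i
      proof -
        have iK: "i \<in> {1..K}" using i Rsub by auto
        have "e \<omega> i \<ge> T" using top_ge_eord[OF ts k1 kK i] eT unfolding T_def by simp
        then have eT': "max (Ep i \<omega>) (Em i \<omega>) / 2 \<ge> T" unfolding e_def by simp
        have Feq: "F i = (let D = (if Ep i \<omega> \<ge> T then -1 else (1::int))
              in (if D = 1 \<and> \<theta> i \<le> 0 then 1 else 0) + (if D = -1 \<and> \<theta> i \<ge> 0 then 1 else 0))"
          unfolding F_def T_def k_def e_def dir_dec_def Let_def by simp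
        have "F i * T \<le> X i \<omega>"
          using pointwise[OF Tpos A(7)[OF iK w] A(8)[OF iK w] eT' Feq] unfolding X_def by simp
        then have "F i * T * (\<delta> / real K) \<le> X i \<omega> * (\<delta> / real K)"
          using A(3) by (intro mult_right_mono) auto
        moreover have "F i * T * (\<delta> / real K) = F i / real k"
          using Td by (metis mult.assoc times_divide_eq_right mult.right_neutral)
        ultimately show ?thesis by (simp add: mult.commute)
      qed
      have "?f \<omega> = (\<Sum>i\<in>R \<omega>. F i / real k)" unfolding fw by (simp add: sum_divide_distrib)
      also have "\<dots> \<le> (\<Sum>i\<in>R \<omega>. \<delta> / real K * X i \<omega>)" using Fb by (rule sum_mono)
      also have "\<dots> \<le> (\<Sum>i\<in>{1..K}. \<delta> / real K * X i \<omega>)"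
        using Rsub Xnn[OF _ w] A(3) by (intro sum_mono2) auto
      also have "\<dots> = g \<omega>" unfolding g_def by (simp add: sum_distrib_left)
      finally show ?thesis .
    qed
  qed
  show ?thesis
  proof (cases "integrable M ?f")
    case True
    have "integral\<^sup>L M ?f \<le> integral\<^sup>L M g" by (rule integral_mono[OF True intg pw])
    then show ?thesis using gle by linarith
  next
    case False
    then show ?thesis using not_integrable_integral_eq[OF False] A(3) by simp
  qed
qed

end
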